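(* Let $X$ be a finite rack. There exists $N_0$ (depending on $X$) such that for every $N\ge N_0$, the natural semigroup homomorphism $S_X^*(N)\to\Gamma_X$, sending the class of $(x_1,\dots,x_n)$ to $x_1\cdots x_n$, is injective.
   Context: A rack is a set $X$ with an operation $x^y$ such that $x\mapsto x^y$ is bijective for each $y$ and $(z^x)^y=(z^y)^{x^y}$. Its connected components $C_1,\dots,C_k$ are the classes of the smallest equivalence relation with $x\sim x^y$. $B_n$ acts on $X^n$ from the right by $(\dots,x_i,x_{i+1},\dots)^{\sigma_i}=(\dots,x_{i+1},x_i^{x_{i+1}},\dots)$. The structure semigroup is $S_X=\bigsqcup_{n\ge1}X^n/B_n$ with concatenation. The structure group is $\Gamma_X=\langle X\mid y^{-1}xy=x^y\text{ for all }x,y\in X\rangle$. For nonnegative $n_1,\dots,n_k$ with sum $n$, $X^*(n_1,\dots,n_k)$ is the set of $(x_1,\dots,x_n)\in X^n$ with exactly $n_j$ entries in $C_j$ for each $j$ whose entries generate $X$ (lie in no proper subset closed under $x^y$), and $S_X^*(N)=\bigcup_{n_1,\dots,n_k\ge N}X^*(n_1,\dots,n_k)/B_n$. *)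

theory Defs
  imports Main
begin

text \<open>A rack: a carrier set X with an operation op x y (written x^y in the paper).\<close>
definition rack :: "'a set \<Rightarrow> ('a \<Rightarrow> 'a \<Rightarrow> 'a) \<Rightarrow> bool" where
  "rack X op \<longleftrightarrow>
     (\<forall>x\<in>X. \<forall>y\<in>X. op x y \<in> X) \<and>
     (\<forall>y\<in>X. bij_betw (\<lambda>x. op x y) X X) \<and>
     (\<forall>x\<in>X. \<forall>y\<in>X. \<forall>z\<in>X. op (op z x) y = op (op z y) (op x y))"

definition rack_rel :: "'a set \<Rightarrow> ('a \<Rightarrow> 'a \<Rightarrow> 'a) \<Rightarrow> ('a \<times> 'a) set" where
  "rack_rel X op = (let R = {(x, op x y) | x y. x \<in> X \<and> y \<in> X} in (R \<union> R\<inverse>)\<^sup>* \<inter> (X \<times> X))"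

definition components :: "'a set \<Rightarrow> ('a \<Rightarrow> 'a \<Rightarrow> 'a) \<Rightarrow> 'a set set" where
  "components X op = X // rack_rel X op"

definition generates :: "'a set \<Rightarrow> ('a \<Rightarrow> 'a \<Rightarrow> 'a) \<Rightarrow> 'a list \<Rightarrow> bool" where
  "generates X op xs \<longleftrightarrow>
     (\<forall>Y. Y \<subseteq> X \<and> set xs \<subseteq> Y \<and> (\<forall>a\<in>Y. \<forall>b\<in>Y. op a b \<in> Y) \<longrightarrow> Y = X)"

text \<open>The braid generator sigma_i (0-based index i) acting on tuples.\<close>
definition sigma :: "('a \<Rightarrow> 'a \<Rightarrow> 'a) \<Rightarrow> nat \<Rightarrow> 'a list \<Rightarrow> 'a list" where
  "sigma op i xs = xs[i := xs ! Suc i, Suc i := op (xs ! i) (xs ! Suc i)]"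

definition hurwitz_step :: "('a \<Rightarrow> 'a \<Rightarrow> 'a) \<Rightarrow> ('a list \<times> 'a list) set" where
  "hurwitz_step op = {(xs, sigma op i xs) | xs i. Suc i < length xs}"

definition braid_equiv :: "('a \<Rightarrow> 'a \<Rightarrow> 'a) \<Rightarrow> 'a list \<Rightarrow> 'a list \<Rightarrow> bool" where
  "braid_equiv op xs ys \<longleftrightarrow> (xs, ys) \<in> (hurwitz_step op \<union> (hurwitz_step op)\<inverse>)\<^sup>*"

text \<open>Elements of the structure group Gamma_X are represented by words over X and inverses:
  (x, True) stands for x, (x, False) for x^{-1}.  gamma_eq is the congruence on words
  generated by free cancellation and the defining relations y^{-1} x y = x^y, i.e.
  equality in the group with presentation <X | y^{-1} x y = x^y>.\<close>
inductive gamma_eq :: "'a set \<Rightarrow> ('a \<Rightarrow> 'a \<Rightarrow> 'a) \<Rightarrow> ('a \<times> bool) list \<Rightarrow> ('a \<times> bool) list \<Rightarrow> bool"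
  for X op where
  refl: "gamma_eq X op w w"
| sym: "gamma_eq X op w v \<Longrightarrow> gamma_eq X op v w"
| trans: "gamma_eq X op u v \<Longrightarrow> gamma_eq X op v w \<Longrightarrow> gamma_eq X op u w"
| ctxt: "gamma_eq X op w v \<Longrightarrow> gamma_eq X op (p @ w @ q) (p @ v @ q)"
| cancel: "x \<in> X \<Longrightarrow> gamma_eq X op [(x, b), (x, \<not> b)] []"
| rel: "x \<in> X \<Longrightarrow> y \<in> X \<Longrightarrow> gamma_eq X op [(y, False), (x, True), (y, True)] [(op x y, True)]"

definition gamma_word :: "'a list \<Rightarrow> ('a \<times> bool) list" where
  "gamma_word xs = map (\<lambda>x. (x, True)) xs"

definition S_star :: "'a set \<Rightarrow> ('a \<Rightarrow> 'a \<Rightarrow> 'a) \<Rightarrow> nat \<Rightarrow> 'a list set" where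
  "S_star X op N = {xs. xs \<noteq> [] \<and> set xs \<subseteq> X \<and> generates X op xs \<and>
      (\<forall>C \<in> components X op. length (filter (\<lambda>x. x \<in> C) xs) \<ge> N)}"

end

theory Submission
  imports Defs "HOL-Library.FuncSet" "HOL-Library.Multiset"
begin

locale frack =
  fixes X :: "'a set" and op :: "'a \<Rightarrow> 'a \<Rightarrow> 'a"
  assumes finX: "finite X" and rk: "rack X op"
begin

lemma op_closed: "x \<in> X \<Longrightarrow> y \<in> X \<Longrightarrow> op x y \<in> X"
  using rk unfolding rack_def by blast

lemma op_bij: "y \<in> X \<Longrightarrow> bij_betw (\<lambda>x. op x y) X X"
  using rk unfolding rack_def by blast

lemma op_ax: "x \<in> X \<Longrightarrow> y \<in> X \<Longrightarrow> z \<in> X \<Longrightarrow> op (op z x) y = op (op z y) (op x y)"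
  using rk unfolding rack_def by blast

definition iop :: "'a \<Rightarrow> 'a \<Rightarrow> 'a" where "iop z y = the_inv_into X (\<lambda>x. op x y) z"

lemma iop_closed: "z \<in> X \<Longrightarrow> y \<in> X \<Longrightarrow> iop z y \<in> X"
  unfolding iop_def using op_bij[of y]
  by (metis bij_betw_def subset_refl the_inv_into_into)

lemma op_iop: "z \<in> X \<Longrightarrow> y \<in> X \<Longrightarrow> op (iop z y) y = z"
  unfolding iop_def using op_bij[of y]
  by (metis bij_betw_def f_the_inv_into_f image_eqI)

lemma iop_op: "z \<in> X \<Longrightarrow> y \<in> X \<Longrightarrow> iop (op z y) y = z"
  unfolding iop_def using op_bij[of y]
  by (metis bij_betw_def the_inv_into_f_f)

lemma iop_unique: "w \<in> X \<Longrightarrow> y \<in> X \<Longrightarrow> op w y = z \<Longrightarrow> iop z y = w"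
  using iop_op by blast

definition stp :: "('a list \<times> 'a list) set" where
  "stp = {(u @ a # b # v, u @ b # op a b # v) | u a b v. set u \<subseteq> X \<and> a \<in> X \<and> b \<in> X \<and> set v \<subseteq> X}"

definition bq :: "'a list \<Rightarrow> 'a list \<Rightarrow> bool" where
  "bq xs ys \<longleftrightarrow> (xs, ys) \<in> (stp \<union> stp\<inverse>)\<^sup>*"

lemma bq_refl[simp]: "bq xs xs"
  unfolding bq_def by simp

lemma bq_sym: "bq xs ys \<Longrightarrow> bq ys xs"
  unfolding bq_def
  by (metis converse_Un converse_converse rtrancl_converseI sup_commute)

lemma bq_trans[trans]: "bq xs ys \<Longrightarrow> bq ys zs \<Longrightarrow> bq xs zs"
  unfolding bq_def by simp

lemma bq_step: "set u \<subseteq> X \<Longrightarrow> a \<in> X \<Longrightarrow> b \<in> X \<Longrightarrow> set v \<subseteq> X \<Longrightarrow>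
   bq (u @ a # b # v) (u @ b # op a b # v)"
  unfolding bq_def stp_def by blast

lemma stp_ctxt: "(x, y) \<in> stp \<Longrightarrow> set p \<subseteq> X \<Longrightarrow> set q \<subseteq> X \<Longrightarrow> (p @ x @ q, p @ y @ q) \<in> stp"
  unfolding stp_def
  apply clarify
  subgoal for u a b v
    apply (rule exI[of _ "p @ u"], rule exI[of _ a], rule exI[of _ b], rule exI[of _ "v @ q"])
    by auto
  done

lemma bq_ctxt: "bq xs ys \<Longrightarrow> set p \<subseteq> X \<Longrightarrow> set q \<subseteq> X \<Longrightarrow> bq (p @ xs @ q) (p @ ys @ q)"
  unfolding bq_def
proof (induction rule: rtrancl_induct)
  case base
  then show ?case by simp
next
  case (step y z)
  from step.hyps(2) have "(p @ y @ q, p @ z @ q) \<in> stp \<union> stp\<inverse>"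
    using stp_ctxt step.prems by blast
  with step show ?case by (meson rtrancl.rtrancl_into_rtrancl)
qed

lemma bq_ctxtL: "bq xs ys \<Longrightarrow> set p \<subseteq> X \<Longrightarrow> bq (p @ xs) (p @ ys)"
  using bq_ctxt[of xs ys p "[]"] by simp

lemma bq_ctxtR: "bq xs ys \<Longrightarrow> set q \<subseteq> X \<Longrightarrow> bq (xs @ q) (ys @ q)"
  using bq_ctxt[of xs ys "[]" q] by simp

lemma stp_X: "(x, y) \<in> stp \<Longrightarrow> set x \<subseteq> X \<and> set y \<subseteq> X"
  unfolding stp_def using op_closed by auto

lemma bq_setX: "bq xs ys \<Longrightarrow> set xs \<subseteq> X \<Longrightarrow> set ys \<subseteq> X"
  unfolding bq_def
proof (induction rule: rtrancl_induct)
  case base then show ?case by simp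
next
  case (step y z) then show ?case using stp_X by blast
qed

lemma stp_hur: "stp \<subseteq> hurwitz_step op"
proof
  fix p assume "p \<in> stp"
  then obtain u a b v where p: "p = (u @ a # b # v, u @ b # op a b # v)"
    unfolding stp_def by blast
  let ?xs = "u @ a # b # v"
  have "sigma op (length u) ?xs = u @ b # op a b # v"
    unfolding sigma_def by (simp add: list_update_append nth_append)
  moreover have "Suc (length u) < length ?xs" by simp
  ultimately show "p \<in> hurwitz_step op" unfolding hurwitz_step_def p
    by (metis (mono_tags, lifting) mem_Collect_eq)
qed

lemma bq_braid: "bq xs ys \<Longrightarrow> braid_equiv op xs ys"
  unfolding bq_def braid_equiv_def
  by (meson Un_mono converse_mono rtrancl_mono stp_hur subsetD)


abbreviation "rr \<equiv> rack_rel X op"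
abbreviation "comps \<equiv> components X op"

lemma rr_equiv: "equiv X rr"
proof -
  define R where "R = {(x, op x y) | x y. x \<in> X \<and> y \<in> X}"
  have rr: "rr = (R \<union> R\<inverse>)\<^sup>* \<inter> (X \<times> X)" unfolding rack_rel_def R_def Let_def by simp
  have RX: "R \<subseteq> X \<times> X" unfolding R_def using op_closed by auto
  show ?thesis unfolding equiv_def
  proof (intro conjI)
    show "rr \<subseteq> X \<times> X" unfolding rr by auto
    show "refl_on X rr" unfolding refl_on_def rr by auto
    show "sym rr" unfolding sym_def rr
      by (metis IntD1 IntD2 IntI SigmaD1 SigmaD2 SigmaI converse_Un converse_converse rtrancl_converseI sup_commute)
    show "trans rr" unfolding trans_def rr by auto
  qed
qed

lemma rr_step: "x \<in> X \<Longrightarrow> y \<in> X \<Longrightarrow> (x, op x y) \<in> rr"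
  unfolding rack_rel_def Let_def using op_closed by blast

lemma finite_comps: "finite comps"
  unfolding components_def using finX rr_equiv by (simp add: finite_quotient equiv_def)

lemma comp_sub: "C \<in> comps \<Longrightarrow> C \<subseteq> X"
  unfolding components_def using rr_equiv in_quotient_imp_subset by blast

lemma comp_ne: "C \<in> comps \<Longrightarrow> \<exists>x. x \<in> C"
  unfolding components_def using rr_equiv in_quotient_imp_non_empty by blast

lemma comp_rel: "C \<in> comps \<Longrightarrow> a \<in> C \<Longrightarrow> b \<in> C \<Longrightarrow> (a, b) \<in> rr"
  unfolding components_def using rr_equiv quotient_eq_iff by fastforce

lemma comp_closed: "C \<in> comps \<Longrightarrow> a \<in> C \<Longrightarrow> (a, b) \<in> rr \<Longrightarrow> b \<in> C"
  unfolding components_def using rr_equiv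
  by (metis equiv_class_eq_iff in_quotient_imp_closed)

lemma comp_ex: "x \<in> X \<Longrightarrow> \<exists>C\<in>comps. x \<in> C"
  unfolding components_def using rr_equiv
  by (meson equiv_class_self quotientI)

lemma comp_uniq: "C \<in> comps \<Longrightarrow> C' \<in> comps \<Longrightarrow> x \<in> C \<Longrightarrow> x \<in> C' \<Longrightarrow> C = C'"
  unfolding components_def using rr_equiv quotient_disj by blast

lemma comp_op: "C \<in> comps \<Longrightarrow> a \<in> X \<Longrightarrow> b \<in> X \<Longrightarrow> op a b \<in> C \<longleftrightarrow> a \<in> C"
proof
  assume C: "C \<in> comps" and a: "a \<in> X" and b: "b \<in> X"
  have r: "(a, op a b) \<in> rr" using rr_step a b .
  { assume "op a b \<in> C" then show "a \<in> C" using comp_closed[OF C] r rr_equiv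
      by (meson equiv_def symD) }
  { assume "a \<in> C" then show "op a b \<in> C" using comp_closed[OF C] r by blast }
qed

definition cnt :: "'a set \<Rightarrow> 'a list \<Rightarrow> nat" where
  "cnt C xs = length (filter (\<lambda>x. x \<in> C) xs)"

lemma cnt_simps[simp]: "cnt C [] = 0" "cnt C (a # xs) = (if a \<in> C then 1 else 0) + cnt C xs"
  "cnt C (xs @ ys) = cnt C xs + cnt C ys"
  unfolding cnt_def by auto

lemma stp_cnt: "(x, y) \<in> stp \<Longrightarrow> C \<in> comps \<Longrightarrow> cnt C x = cnt C y"
  unfolding stp_def using comp_op by auto

lemma bq_cnt: "bq xs ys \<Longrightarrow> C \<in> comps \<Longrightarrow> cnt C xs = cnt C ys"
  unfolding bq_def
proof (induction rule: rtrancl_induct)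
  case base then show ?case by simp
next
  case (step y z) then show ?case using stp_cnt by fastforce
qed

fun act :: "'a list \<Rightarrow> 'a \<Rightarrow> 'a" where
  "act [] z = z"
| "act (b # u) z = act u (op z b)"

lemma act_append: "act (p @ q) z = act q (act p z)"
  by (induction p arbitrary: z) auto

lemma act_closed: "set u \<subseteq> X \<Longrightarrow> z \<in> X \<Longrightarrow> act u z \<in> X"
  by (induction u arbitrary: z) (auto simp: op_closed)

lemma act_bij: "set u \<subseteq> X \<Longrightarrow> bij_betw (act u) X X"
proof (induction u)
  case Nil then show ?case by (simp add: bij_betw_def inj_on_def)
next
  case (Cons b u)
  have "act (b # u) = act u \<circ> (\<lambda>z. op z b)" by auto
  then show ?case using bij_betw_trans[OF op_bij[of b] Cons.IH] Cons.prems by (simp add: comp_def)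
qed

lemma act_comp: "C \<in> comps \<Longrightarrow> set u \<subseteq> X \<Longrightarrow> a \<in> X \<Longrightarrow> act u a \<in> C \<longleftrightarrow> a \<in> C"
  by (induction u arbitrary: a) (auto simp: comp_op op_closed)

lemma mv_right: "set u \<subseteq> X \<Longrightarrow> a \<in> X \<Longrightarrow> bq (a # u) (u @ [act u a])"
proof (induction u arbitrary: a)
  case Nil then show ?case by simp
next
  case (Cons b u)
  have "bq (a # b # u) (b # op a b # u)" using bq_step[of "[]" a b u] Cons.prems by simp
  also have "bq (b # op a b # u) (b # (u @ [act u (op a b)]))"
    using bq_ctxtL[OF Cons.IH[of "op a b"], of "[b]"] Cons.prems op_closed by simp
  finally show ?case by simp
qed

lemma mv_single: "set t \<subseteq> X \<Longrightarrow> a \<in> X \<Longrightarrow> bq (t @ [a]) (a # map (\<lambda>y. op y a) t)"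
proof (induction t)
  case Nil then show ?case by simp
next
  case (Cons b t)
  have "bq ((b # t) @ [a]) (b # a # map (\<lambda>y. op y a) t)"
    using bq_ctxtL[OF Cons.IH, of "[b]"] Cons.prems by simp
  also have "bq (b # a # map (\<lambda>y. op y a) t) (a # op b a # map (\<lambda>y. op y a) t)"
    using bq_step[of "[]" b a "map (\<lambda>y. op y a) t"] Cons.prems op_closed by auto
  finally show ?case by simp
qed

lemma mv_block: "set t \<subseteq> X \<Longrightarrow> set u \<subseteq> X \<Longrightarrow> bq (t @ u) (u @ map (act u) t)"
proof (induction u arbitrary: t)
  case Nil then show ?case by (simp add: map_idI)
next
  case (Cons a u)
  have "bq (t @ a # u) (a # map (\<lambda>y. op y a) t @ u)"
    using bq_ctxtR[OF mv_single[of t a], of u] Cons.prems by simp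
  also have "bq (a # map (\<lambda>y. op y a) t @ u) (a # u @ map (act u) (map (\<lambda>y. op y a) t))"
    using bq_ctxtL[OF Cons.IH[of "map (\<lambda>y. op y a) t"], of "[a]"] Cons.prems op_closed by auto
  finally show ?case by (simp add: comp_def)
qed

definition cen :: "'a list \<Rightarrow> bool" where
  "cen u \<longleftrightarrow> set u \<subseteq> X \<and> (\<forall>y\<in>X. act u y = y)"

lemma cen_comm: "cen u \<Longrightarrow> set t \<subseteq> X \<Longrightarrow> bq (t @ u) (u @ t)"
  using mv_block[of t u] unfolding cen_def
  by (metis (no_types, lifting) map_idI subset_code(1))

lemma cen_append: "cen u \<Longrightarrow> cen v \<Longrightarrow> cen (u @ v)"
  unfolding cen_def by (auto simp: act_append)

lemma act_map_op: "set v \<subseteq> X \<Longrightarrow> a \<in> X \<Longrightarrow> z \<in> X \<Longrightarrow>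
   act (map (\<lambda>y. op y a) v) z = op (act v (iop z a)) a"
proof (induction v arbitrary: z)
  case Nil then show ?case by (simp add: op_iop)
next
  case (Cons b v)
  have b: "b \<in> X" using Cons by auto
  have i: "iop z a \<in> X" using iop_closed Cons by auto
  have "op (op (iop z a) b) a = op z (op b a)"
    using op_ax[OF b \<open>a \<in> X\<close> i] op_iop Cons.prems by simp
  then have "iop (op z (op b a)) a = iop (op (op (iop z a) b) a) a" by simp
  also have "\<dots> = op (iop z a) b" using iop_op op_closed b i Cons.prems by simp
  finally have "iop (op z (op b a)) a = op (iop z a) b" .
  then show ?case using Cons op_closed b by simp
qed

lemma act_map_iop: "set v \<subseteq> X \<Longrightarrow> a \<in> X \<Longrightarrow> z \<in> X \<Longrightarrow>
   act (map (\<lambda>y. iop y a) v) z = iop (act v (op z a)) a"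
proof (induction v arbitrary: z)
  case Nil then show ?case by (simp add: iop_op)
next
  case (Cons b v)
  have b: "b \<in> X" using Cons by auto
  have i: "iop b a \<in> X" using iop_closed Cons by auto
  have "op (op z (iop b a)) a = op (op z a) b"
    using op_ax[OF i \<open>a \<in> X\<close> \<open>z \<in> X\<close>] op_iop Cons.prems b by simp
  then show ?case using Cons op_closed b i by simp
qed

lemma cen_map_op: "cen v \<Longrightarrow> a \<in> X \<Longrightarrow> cen (map (\<lambda>y. op y a) v)"
  unfolding cen_def using act_map_op op_closed iop_closed op_iop by auto

lemma cen_map_iop: "cen v \<Longrightarrow> a \<in> X \<Longrightarrow> cen (map (\<lambda>y. iop y a) v)"
  unfolding cen_def using act_map_iop op_closed iop_closed iop_op by auto

end

context frack
begin

lemma act_rep: "act (replicate n x) y = ((\<lambda>z. op z x) ^^ n) y"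
  by (induction n arbitrary: y) (simp_all add: funpow_Suc_right del: funpow.simps)

lemma ex_e: "\<exists>e>0. \<forall>x\<in>X. \<forall>y\<in>X. ((\<lambda>z. op z x) ^^ e) y = y"
proof -
  define S where "S = PiE X (\<lambda>_. PiE X (\<lambda>_. X))"
  have finS: "finite S" unfolding S_def using finX by (simp add: finite_PiE)
  define g where "g k = restrict (\<lambda>x. restrict (\<lambda>y. ((\<lambda>z. op z x) ^^ k) y) X) X" for k
  have fb: "bij_betw ((\<lambda>z. op z x) ^^ k) X X" if "x \<in> X" for x k
    using bij_betw_funpow[OF op_bij[OF that]] .
  have gS: "g ` {..card S} \<subseteq> S"
    unfolding S_def g_def using fb bij_betw_apply by fastforce
  have "\<not> inj_on g {..card S}"
  proof
    assume "inj_on g {..card S}"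
    then have "card (g ` {..card S}) = card {..card S}" by (rule card_image)
    moreover have "card (g ` {..card S}) \<le> card S" using card_mono[OF finS gS] .
    ultimately show False by simp
  qed
  then obtain i j where ij: "i \<noteq> j" "g i = g j" unfolding inj_on_def by blast
  have main: "\<exists>e>0. \<forall>x\<in>X. \<forall>y\<in>X. ((\<lambda>z. op z x) ^^ e) y = y"
    if ij: "i < j" "g i = g j" for i j
  proof (intro exI[of _ "j - i"] conjI ballI)
    show "0 < j - i" using ij by simp
    fix x z assume x: "x \<in> X" and z: "z \<in> X"
    let ?f = "\<lambda>z. op z x"
    obtain y where y: "y \<in> X" "z = (?f ^^ i) y"
      using fb[OF x, of i] z unfolding bij_betw_def by auto
    have eq: "(?f ^^ i) y = (?f ^^ j) y"
      using fun_cong[OF fun_cong[OF ij(2), of x], of y] x y unfolding g_def by simp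
    have "(?f ^^ j) y = (?f ^^ (j - i)) ((?f ^^ i) y)"
      using funpow_add[of "j - i" i ?f] ij(1) by simp
    then show "(?f ^^ (j - i)) z = z" using eq y by simp
  qed
  show ?thesis
  proof (cases "i < j")
    case True then show ?thesis using main ij by blast
  next
    case False then have "j < i" using ij by simp
    then show ?thesis using main ij by metis
  qed
qed

definition ee :: nat where "ee = (SOME e. e > 0 \<and> (\<forall>x\<in>X. \<forall>y\<in>X. ((\<lambda>z. op z x) ^^ e) y = y))"

lemma ee_pos: "ee > 0" and ee_id: "x \<in> X \<Longrightarrow> y \<in> X \<Longrightarrow> ((\<lambda>z. op z x) ^^ ee) y = y"
  using someI_ex[OF ex_e] unfolding ee_def by auto

definition Z :: "'a list \<Rightarrow> 'a list" where "Z s = concat (map (\<lambda>x. replicate ee x) s)"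

lemma Z_simps[simp]: "Z [] = []" "Z (x # s) = replicate ee x @ Z s" "Z (a @ b) = Z a @ Z b"
  unfolding Z_def by auto

lemma cen_Nil[simp]: "cen []" unfolding cen_def by simp

lemma cen_Z: "set s \<subseteq> X \<Longrightarrow> cen (Z s)"
proof (induction s)
  case Nil then show ?case by simp
next
  case (Cons x s)
  have "cen (replicate ee x)" unfolding cen_def using Cons.prems ee_id by (simp add: act_rep set_replicate_conv_if)
  then show ?case using Cons cen_append by simp
qed

lemma set_Z: "set s \<subseteq> X \<Longrightarrow> set (Z s) \<subseteq> X"
  using cen_Z cen_def by blast

lemma Z_perm: "mset a = mset b \<Longrightarrow> set a \<subseteq> X \<Longrightarrow> bq (Z a) (Z b)"
proof (induction a arbitrary: b)
  case Nil then show ?case by (cases b) auto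
next
  case (Cons x a)
  have "x \<in> set b" using Cons.prems(1) by (metis list.set_intros(1) set_mset_mset)
  then obtain b1 b2 where b: "b = b1 @ x # b2" by (meson split_list)
  have sb: "set b \<subseteq> X" using Cons.prems by (metis set_mset_mset)
  have "mset a = mset (b1 @ b2)" using Cons.prems(1) b by simp
  then have "bq (Z a) (Z (b1 @ b2))" using Cons.IH[of "b1 @ b2"] Cons.prems by auto
  then have 1: "bq (Z (x # a)) (Z (x # b1 @ b2))"
    using bq_ctxtL[of _ _ "replicate ee x"] Cons.prems by (simp add: set_replicate_conv_if)
  have "bq (Z b1 @ Z [x]) (Z [x] @ Z b1)"
    using cen_comm[OF cen_Z[of "[x]"], of "Z b1"] Cons.prems sb b set_Z by simp
  then have "bq ((Z b1 @ Z [x]) @ Z b2) ((Z [x] @ Z b1) @ Z b2)"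
    by (rule bq_ctxtR) (use sb b set_Z in auto)
  then have "bq (Z b) (Z (x # b1 @ b2))" using b by simp
  then show ?case using 1 bq_sym bq_trans by blast
qed

lemma Z_perm_pre: "mset a = mset b \<Longrightarrow> set a \<subseteq> X \<Longrightarrow> set t \<subseteq> X \<Longrightarrow> bq (Z a @ t) (Z b @ t)"
  using Z_perm bq_ctxtR by blast

fun nm :: "('a \<times> bool) list \<Rightarrow> 'a list" where
  "nm [] = []"
| "nm ((x, b) # w) = (if x \<in> X then (if b then [x] else replicate (ee - 1) x) else []) @ nm w"

fun dn :: "('a \<times> bool) list \<Rightarrow> 'a list" where
  "dn [] = []"
| "dn ((x, b) # w) = (if x \<in> X \<and> \<not> b then [x] else []) @ dn w"

lemma nm_append[simp]: "nm (p @ q) = nm p @ nm q"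
  by (induction p rule: nm.induct) auto

lemma dn_append[simp]: "dn (p @ q) = dn p @ dn q"
  by (induction p rule: dn.induct) auto

lemma nm_X: "set (nm w) \<subseteq> X"
  by (induction w rule: nm.induct) auto

lemma dn_X: "set (dn w) \<subseteq> X"
  by (induction w rule: dn.induct) auto

lemma nm_gw: "set xs \<subseteq> X \<Longrightarrow> nm (gamma_word xs) = xs"
  unfolding gamma_word_def by (induction xs) auto

lemma dn_gw: "dn (gamma_word xs) = []"
  unfolding gamma_word_def by (induction xs) auto


lemma ctxt_helper:
  assumes "set s \<subseteq> X" "set dp \<subseteq> X" "set d \<subseteq> X" "set dq \<subseteq> X"
    "set np \<subseteq> X" "set n \<subseteq> X" "set nq \<subseteq> X"
  shows "bq (Z (s @ dp @ d @ dq) @ np @ n @ nq) (Z (dp @ dq) @ np @ Z (s @ d) @ n @ nq)"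
proof -
  have sX: "set (np @ n @ nq) \<subseteq> X" using assms by auto
  have "bq (Z (s @ dp @ d @ dq) @ np @ n @ nq) (Z (dp @ dq @ s @ d) @ np @ n @ nq)"
    using Z_perm_pre[OF _ _ sX, of "s @ dp @ d @ dq" "dp @ dq @ s @ d"] assms
    by (simp add: ac_simps)
  also have "bq (Z (dp @ dq @ s @ d) @ np @ n @ nq) (Z (dp @ dq) @ np @ Z (s @ d) @ n @ nq)"
  proof -
    have "bq (np @ Z (s @ d)) (Z (s @ d) @ np)"
      using cen_comm[OF cen_Z[of "s @ d"], of np] assms by simp
    then have "bq (Z (dp @ dq) @ (Z (s @ d) @ np) @ n @ nq) (Z (dp @ dq) @ (np @ Z (s @ d)) @ n @ nq)"
      using bq_ctxt[of _ _ "Z (dp @ dq)" "n @ nq"] assms set_Z bq_sym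
      by (metis Un_subset_iff set_append)
    then show ?thesis by simp
  qed
  finally show ?thesis .
qed

lemma loc: "gamma_eq X op w v \<Longrightarrow>
  \<exists>s. set s \<subseteq> X \<and> bq (Z (s @ dn v) @ nm w) (Z (s @ dn w) @ nm v)"
proof (induction rule: gamma_eq.induct)
  case (refl w)
  then show ?case by (intro exI[of _ "[]"]) simp
next
  case (sym w v)
  then show ?case using bq_sym by blast
next
  case (trans u v w)
  from trans.IH(1) obtain s1 where s1: "set s1 \<subseteq> X"
    "bq (Z (s1 @ dn v) @ nm u) (Z (s1 @ dn u) @ nm v)" by blast
  from trans.IH(2) obtain s2 where s2: "set s2 \<subseteq> X"
    "bq (Z (s2 @ dn w) @ nm v) (Z (s2 @ dn v) @ nm w)" by blast
  note X = s1(1) s2(1) dn_X[of u] dn_X[of v] dn_X[of w] nm_X[of u] nm_X[of v] nm_X[of w]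
  have "bq (Z ((s1 @ s2 @ dn v) @ dn w) @ nm u) (Z (s2 @ dn w) @ Z (s1 @ dn v) @ nm u)"
    using Z_perm_pre[of "(s1 @ s2 @ dn v) @ dn w" "s2 @ dn w @ s1 @ dn v" "nm u"] X
    by (simp add: ac_simps)
  also have "bq (Z (s2 @ dn w) @ Z (s1 @ dn v) @ nm u) (Z (s2 @ dn w) @ Z (s1 @ dn u) @ nm v)"
    using bq_ctxtL[OF s1(2), of "Z (s2 @ dn w)"] X set_Z by simp
  also have "bq (Z (s2 @ dn w) @ Z (s1 @ dn u) @ nm v) (Z (s1 @ dn u) @ Z (s2 @ dn w) @ nm v)"
    using Z_perm_pre[of "s2 @ dn w @ s1 @ dn u" "s1 @ dn u @ s2 @ dn w" "nm v"] X
    by (simp add: ac_simps)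
  also have "bq (Z (s1 @ dn u) @ Z (s2 @ dn w) @ nm v) (Z (s1 @ dn u) @ Z (s2 @ dn v) @ nm w)"
    using bq_ctxtL[OF s2(2), of "Z (s1 @ dn u)"] X set_Z by simp
  also have "bq (Z (s1 @ dn u) @ Z (s2 @ dn v) @ nm w) (Z ((s1 @ s2 @ dn v) @ dn u) @ nm w)"
    using Z_perm_pre[of "s1 @ dn u @ s2 @ dn v" "(s1 @ s2 @ dn v) @ dn u" "nm w"] X
    by (simp add: ac_simps)
  finally have calc: "bq (Z ((s1 @ s2 @ dn v) @ dn w) @ nm u) (Z ((s1 @ s2 @ dn v) @ dn u) @ nm w)" .
  have sX: "set (s1 @ s2 @ dn v) \<subseteq> X" using X by simp
  show ?case using calc sX by blast
next
  case (ctxt w v p q)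
  from ctxt.IH obtain s where s: "set s \<subseteq> X"
    "bq (Z (s @ dn v) @ nm w) (Z (s @ dn w) @ nm v)" by blast
  note X = s(1) dn_X[of p] dn_X[of q] dn_X[of v] dn_X[of w] nm_X[of p] nm_X[of q] nm_X[of v] nm_X[of w]
  have "bq (Z (s @ dn p @ dn v @ dn q) @ nm p @ nm w @ nm q) (Z (dn p @ dn q) @ nm p @ Z (s @ dn v) @ nm w @ nm q)"
    using ctxt_helper[of s "dn p" "dn v" "dn q" "nm p" "nm w" "nm q"] X by blast
  also have "bq (Z (dn p @ dn q) @ nm p @ Z (s @ dn v) @ nm w @ nm q) (Z (dn p @ dn q) @ nm p @ Z (s @ dn w) @ nm v @ nm q)"
    using bq_ctxt[OF s(2), of "Z (dn p @ dn q) @ nm p" "nm q"] X set_Z by simp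
  also have "bq (Z (dn p @ dn q) @ nm p @ Z (s @ dn w) @ nm v @ nm q) (Z (s @ dn p @ dn w @ dn q) @ nm p @ nm v @ nm q)"
    using bq_sym[OF ctxt_helper[of s "dn p" "dn w" "dn q" "nm p" "nm v" "nm q"]] X by blast
  finally have "bq (Z (s @ dn (p @ v @ q)) @ nm (p @ w @ q)) (Z (s @ dn (p @ w @ q)) @ nm (p @ v @ q))"
    by (simp only: dn_append nm_append append_assoc)
  then show ?case using s(1) by blast
next
  case (cancel x b)
  have r1: "replicate (ee - 1) x @ [x] = replicate ee x"
    using ee_pos by (metis Suc_diff_1 replicate_Suc replicate_append_same)
  have r2: "x # replicate (ee - 1) x = replicate ee x"
    using ee_pos by (metis Suc_diff_1 replicate_Suc)
  have "nm [(x, b), (x, \<not> b)] = replicate ee x"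
    using cancel by (cases b) (simp_all only: nm.simps r1 r2 if_True if_False append_Nil2 not_True_eq_False not_False_eq_True append_Cons append_Nil)
  moreover have "dn [(x, b), (x, \<not> b)] = [x]" using cancel by (cases b) auto
  ultimately show ?case by (intro exI[of _ "[]"]) simp
next
  case (rel x y)
  then have xy: "x \<in> X" "y \<in> X" by auto
  have "bq (replicate (ee - 1) y @ x # y # []) (replicate (ee - 1) y @ y # op x y # [])"
    using bq_step[of "replicate (ee - 1) y" x y "[]"] xy by (simp add: set_replicate_conv_if)
  moreover have "replicate (ee - 1) y @ [y] = replicate ee y"
    using ee_pos by (metis Suc_diff_1 replicate_Suc replicate_append_same)
  ultimately have "bq (replicate (ee - 1) y @ [x, y]) (replicate ee y @ [op x y])"
    by (metis append_assoc append_Cons append_Nil)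
  then show ?case using xy op_closed[OF xy] by (intro exI[of _ "[]"]) simp
qed

lemma loc_gw: "gamma_eq X op (gamma_word xs) (gamma_word ys) \<Longrightarrow> set xs \<subseteq> X \<Longrightarrow> set ys \<subseteq> X \<Longrightarrow>
   \<exists>s. set s \<subseteq> X \<and> bq (Z s @ xs) (Z s @ ys)"
  using loc[of "gamma_word xs" "gamma_word ys"] by (simp add: nm_gw dn_gw)

end

context frack
begin

definition K0 :: nat where "K0 = card X + card (PiE X (\<lambda>_. X)) + 1"

lemma gen_mono: "generates X op t \<Longrightarrow> set t \<subseteq> set m \<Longrightarrow> generates X op m"
  unfolding generates_def by blast

lemma rd: "set w \<subseteq> X \<Longrightarrow> \<exists>B. set B \<subseteq> X \<and> bq w (remdups w @ B) \<and>
    (\<forall>C\<in>comps. cnt C B + cnt C (remdups w) = cnt C w)"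
proof (induction w)
  case Nil then show ?case by (intro exI[of _ "[]"]) simp
next
  case (Cons a w)
  then obtain B where B: "set B \<subseteq> X" "bq w (remdups w @ B)"
    "\<forall>C\<in>comps. cnt C B + cnt C (remdups w) = cnt C w" by auto
  have a: "a \<in> X" and w: "set w \<subseteq> X" using Cons.prems by auto
  have R: "set (remdups w) \<subseteq> X" using w by simp
  have 1: "bq (a # w) (a # remdups w @ B)" using bq_ctxtL[OF B(2), of "[a]"] a by simp
  show ?case
  proof (cases "a \<in> set w")
    case True
    have "bq ((a # remdups w) @ B) ((remdups w @ [act (remdups w) a]) @ B)"
      using bq_ctxtR[OF mv_right[OF R a], of B] B(1) by simp
    then have "bq (a # w) (remdups (a # w) @ (act (remdups w) a # B))" using 1 True bq_trans by simp
    moreover have "set (act (remdups w) a # B) \<subseteq> X" using act_closed R a B(1) by simp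
    moreover have "\<forall>C\<in>comps. cnt C (act (remdups w) a # B) + cnt C (remdups (a # w)) = cnt C (a # w)"
      using B(3) True act_comp[OF _ R a] by auto
    ultimately show ?thesis by blast
  next
    case False
    then show ?thesis using 1 B by (intro exI[of _ B]) auto
  qed
qed

lemma cen_split:
  assumes B: "set B \<subseteq> X" and C: "card (PiE X (\<lambda>_. X)) < cnt C B"
  shows "\<exists>B1 u B2. B = B1 @ u @ B2 \<and> cen u \<and> (\<exists>c\<in>set u. c \<in> C)"
proof -
  define S where "S = PiE X (\<lambda>_. X)"
  have finS: "finite S" unfolding S_def using finX by (simp add: finite_PiE)
  define J where "J = {i. i < length B \<and> B ! i \<in> C}"
  have cardJ: "card J = cnt C B" unfolding J_def cnt_def by (simp add: length_filter_conv_card)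
  define pf where "pf i = restrict (act (take i B)) X" for i
  have tX: "set (take i B) \<subseteq> X" for i using B by (meson set_take_subset subset_trans)
  have pfS: "pf ` J \<subseteq> S" unfolding pf_def S_def using act_closed[OF tX] by auto
  have "\<not> inj_on pf J"
  proof
    assume "inj_on pf J"
    then have "card (pf ` J) = card J" by (rule card_image)
    moreover have "card (pf ` J) \<le> card S" using card_mono[OF finS pfS] .
    ultimately show False using C cardJ S_def by simp
  qed
  then obtain i j where ij: "i \<in> J" "j \<in> J" "i \<noteq> j" "pf i = pf j" unfolding inj_on_def by blast
  have main: "\<exists>B1 u B2. B = B1 @ u @ B2 \<and> cen u \<and> (\<exists>c\<in>set u. c \<in> C)"
    if ij: "i \<in> J" "j \<in> J" "i < j" "pf i = pf j" for i j
  proof -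
    define u where "u = drop i (take j B)"
    have tj: "take j B = take i B @ u" unfolding u_def using ij(3)
      by (metis append_take_drop_id less_imp_le_nat min.absorb1 take_take)
    have Bs: "B = take i B @ u @ drop j B" using tj by (metis append_assoc append_take_drop_id)
    have uX: "set u \<subseteq> X" using B Bs by (metis Un_subset_iff set_append)
    have cu: "cen u" unfolding cen_def
    proof (intro conjI ballI uX)
      fix z assume z: "z \<in> X"
      obtain y where y: "y \<in> X" "z = act (take i B) y"
        using act_bij[OF tX[of i]] z unfolding bij_betw_def by auto
      have "act (take j B) y = act (take i B) y"
        using fun_cong[OF ij(4), of y] y unfolding pf_def by simp
      then show "act u z = z" using y tj by (simp add: act_append)
    qed
    have jl: "j < length B" using ij(2) J_def by simp
    have "u ! 0 = B ! i" unfolding u_def using ij(3) jl by simp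
    moreover have "u \<noteq> []" unfolding u_def using ij(3) jl by simp
    ultimately have "B ! i \<in> set u" by (metis nth_mem length_greater_0_conv)
    then show ?thesis using Bs cu ij(1) J_def by blast
  qed
  show ?thesis
  proof (cases "i < j")
    case True then show ?thesis using main ij by blast
  next
    case False then have "j < i" using ij by simp
    then show ?thesis using main[of j i] ij by metis
  qed
qed

inductive_set orb :: "'a \<Rightarrow> 'a list \<Rightarrow> 'a set" for c t where
  base: "c \<in> orb c t"
| fwd: "y \<in> orb c t \<Longrightarrow> a \<in> set t \<Longrightarrow> op y a \<in> orb c t"
| bwd: "y \<in> orb c t \<Longrightarrow> a \<in> set t \<Longrightarrow> iop y a \<in> orb c t"

lemma orb_X: "y \<in> orb c t \<Longrightarrow> c \<in> X \<Longrightarrow> set t \<subseteq> X \<Longrightarrow> y \<in> X"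
  by (induction rule: orb.induct) (auto simp: op_closed iop_closed)

lemma orb_reach:
  assumes u: "cen u" "c \<in> set u" and t: "set t \<subseteq> X"
  shows "y \<in> orb c t \<Longrightarrow> \<exists>v. cen v \<and> y \<in> set v \<and> bq (u @ t) (v @ t)"
proof (induction rule: orb.induct)
  case base then show ?case by (intro exI[of _ u]) (simp add: u)
next
  case (fwd y a)
  then obtain v where v: "cen v" "y \<in> set v" "bq (u @ t) (v @ t)" by blast
  from fwd(2) obtain t1 t2 where tt: "t = t1 @ a # t2" by (meson split_list)
  have a: "a \<in> X" and t1: "set t1 \<subseteq> X" and t2: "set t2 \<subseteq> X" using t tt by auto
  have vX: "set v \<subseteq> X" using v(1) cen_def by blast
  let ?v' = "map (\<lambda>y. op y a) v"
  have cv': "cen ?v'" using cen_map_op[OF v(1) a] .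
  have "bq ((v @ t1) @ a # t2) ((t1 @ v) @ a # t2)"
    using bq_ctxtR[OF bq_sym[OF cen_comm[OF v(1) t1]], of "a # t2"] a t2 by simp
  then have "bq (v @ t) (t1 @ (v @ [a]) @ t2)" using tt by simp
  also have "bq (t1 @ (v @ [a]) @ t2) (t1 @ (a # ?v') @ t2)"
    using bq_ctxt[OF mv_single[OF vX a], of t1 t2] t1 t2 by simp
  also have "bq (t1 @ (a # ?v') @ t2) (?v' @ t)"
  proof -
    have "bq ((t1 @ [a]) @ ?v') (?v' @ (t1 @ [a]))" using cen_comm[OF cv', of "t1 @ [a]"] t1 a by simp
    then have "bq ((t1 @ [a]) @ ?v' @ t2) (?v' @ (t1 @ [a]) @ t2)"
      using bq_ctxtR[of _ _ t2] t2 by fastforce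
    then show ?thesis using tt by simp
  qed
  finally have "bq (u @ t) (?v' @ t)" using v(3) bq_trans by blast
  moreover have "op y a \<in> set ?v'" using v(2) by simp
  ultimately show ?case using cv' by blast
next
  case (bwd y a)
  then obtain v where v: "cen v" "y \<in> set v" "bq (u @ t) (v @ t)" by blast
  from bwd(2) obtain t1 t2 where tt: "t = t1 @ a # t2" by (meson split_list)
  have a: "a \<in> X" and t1: "set t1 \<subseteq> X" and t2: "set t2 \<subseteq> X" using t tt by auto
  have vX: "set v \<subseteq> X" using v(1) cen_def by blast
  let ?v' = "map (\<lambda>y. iop y a) v"
  have cv': "cen ?v'" using cen_map_iop[OF v(1) a] .
  have v'X: "set ?v' \<subseteq> X" using cv' cen_def by blast
  have bk: "map (\<lambda>y. op y a) ?v' = v" using vX a op_iop by (induction v) auto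
  have "bq ((v @ (t1 @ [a])) @ t2) (((t1 @ [a]) @ v) @ t2)"
    using bq_ctxtR[OF bq_sym[OF cen_comm[OF v(1), of "t1 @ [a]"]], of t2] a t1 t2 by simp
  then have "bq (v @ t) (t1 @ (a # v) @ t2)" using tt by simp
  also have "bq (t1 @ (a # v) @ t2) (t1 @ (?v' @ [a]) @ t2)"
    using bq_ctxt[OF bq_sym[OF mv_single[OF v'X a]], of t1 t2] t1 t2 bk by simp
  also have "bq (t1 @ (?v' @ [a]) @ t2) (?v' @ t)"
  proof -
    have "bq (t1 @ ?v') (?v' @ t1)" using cen_comm[OF cv' t1] .
    then have "bq ((t1 @ ?v') @ a # t2) ((?v' @ t1) @ a # t2)"
      using bq_ctxtR[of _ _ "a # t2"] t2 a by fastforce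
    then show ?thesis using tt by simp
  qed
  finally have "bq (u @ t) (?v' @ t)" using v(3) bq_trans by blast
  moreover have "iop y a \<in> set ?v'" using v(2) by simp
  ultimately show ?case using cv' by blast
qed

lemma orb_closed:
  assumes c: "c \<in> X" and t: "set t \<subseteq> X" "generates X op t"
  shows "\<forall>x\<in>X. \<forall>y\<in>orb c t. op y x \<in> orb c t \<and> iop y x \<in> orb c t"
proof -
  define T where "T = {x \<in> X. \<forall>y\<in>orb c t. op y x \<in> orb c t \<and> iop y x \<in> orb c t}"
  have oX: "y \<in> orb c t \<Longrightarrow> y \<in> X" for y using orb_X c t by blast
  have "set t \<subseteq> T" unfolding T_def using t(1) orb.fwd orb.bwd by blast
  moreover have "\<forall>a\<in>T. \<forall>b\<in>T. op a b \<in> T"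
  proof (intro ballI)
    fix a b assume a: "a \<in> T" and b: "b \<in> T"
    have aX: "a \<in> X" and bX: "b \<in> X" using a b T_def by auto
    have abX: "op a b \<in> X" using op_closed aX bX by blast
    have "op y (op a b) \<in> orb c t \<and> iop y (op a b) \<in> orb c t" if y: "y \<in> orb c t" for y
    proof
      have yX: "y \<in> X" using oX y .
      define ib where "ib = iop y b"
      have ib: "ib \<in> orb c t" using b y T_def ib_def by blast
      have ibX: "ib \<in> X" using oX ib .
      have "op (op ib a) b = op (op ib b) (op a b)" using op_ax[OF aX bX ibX] .
      also have "op ib b = y" unfolding ib_def using op_iop yX bX by blast
      finally have eq: "op y (op a b) = op (op ib a) b" by simp
      show "op y (op a b) \<in> orb c t" unfolding eq using a b ib T_def by blast
      define q where "q = op (iop ib a) b"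
      have iq: "iop ib a \<in> orb c t" using a ib T_def by blast
      have q: "q \<in> orb c t" unfolding q_def using b iq T_def by blast
      have iqX: "iop ib a \<in> X" using oX iq .
      have "op q (op a b) = op (op (iop ib a) a) b" unfolding q_def using op_ax[OF aX bX iqX] by simp
      also have "\<dots> = op ib b" using op_iop ibX aX by simp
      also have "\<dots> = y" unfolding ib_def using op_iop yX bX by blast
      finally have "iop y (op a b) = q" using iop_unique[OF oX[OF q] abX] by blast
      then show "iop y (op a b) \<in> orb c t" using q by simp
    qed
    then show "op a b \<in> T" unfolding T_def using abX by blast
  qed
  moreover have "T \<subseteq> X" unfolding T_def by blast
  ultimately have "T = X" using t(2) unfolding generates_def by blast
  then show ?thesis unfolding T_def by blast
qed

lemma rr_orb:
  assumes "(c, x) \<in> rr" and cl: "\<forall>x\<in>X. \<forall>y\<in>orb c t. op y x \<in> orb c t \<and> iop y x \<in> orb c t"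
  shows "x \<in> orb c t"
proof -
  define R where "R = {(x, op x y) | x y. x \<in> X \<and> y \<in> X}"
  have "(c, x) \<in> (R \<union> R\<inverse>)\<^sup>*" using assms(1) unfolding rack_rel_def R_def Let_def by simp
  then show ?thesis
  proof (induction rule: rtrancl_induct)
    case base then show ?case by (rule orb.base)
  next
    case (step p q)
    from step.hyps(2) show ?case
    proof
      assume "(p, q) \<in> R"
      then obtain y where "q = op p y" "y \<in> X" unfolding R_def by blast
      then show ?thesis using cl step.IH by blast
    next
      assume "(p, q) \<in> R\<inverse>"
      then obtain y where "p = op q y" "y \<in> X" "q \<in> X" unfolding R_def by blast
      then have "q = iop p y" using iop_op by simp
      then show ?thesis using cl step.IH \<open>y \<in> X\<close> by blast
    qed
  qed
qed

lemma absorb: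
  assumes w: "set w \<subseteq> X" "generates X op w" and C: "C \<in> comps" "K0 \<le> cnt C w" and x: "x \<in> C"
  shows "\<exists>m. set m \<subseteq> X \<and> generates X op m \<and> bq w (x # m)"
proof -
  obtain B where B: "set B \<subseteq> X" "bq w (remdups w @ B)"
    "\<forall>C\<in>comps. cnt C B + cnt C (remdups w) = cnt C w" using rd[OF w(1)] by blast
  have "cnt C (remdups w) \<le> length (remdups w)" unfolding cnt_def by simp
  also have "\<dots> = card (set w)" by (simp add: length_remdups_card_conv)
  also have "\<dots> \<le> card X" using card_mono[OF finX w(1)] .
  finally have "card (PiE X (\<lambda>_. X)) < cnt C B" using B(3) C K0_def by fastforce
  then obtain B1 u B2 where sp: "B = B1 @ u @ B2" "cen u" "\<exists>c\<in>set u. c \<in> C"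
    using cen_split[OF B(1)] by blast
  then obtain c where c: "c \<in> set u" "c \<in> C" by blast
  define t where "t = remdups w @ B1 @ B2"
  have uX: "set u \<subseteq> X" using sp(2) cen_def by blast
  have tX: "set t \<subseteq> X" using B(1) w sp(1) t_def by auto
  have tg: "generates X op t" using gen_mono[OF w(2)] t_def by auto
  have "bq ((remdups w @ B1) @ u) (u @ (remdups w @ B1))"
    using cen_comm[OF sp(2), of "remdups w @ B1"] w B(1) sp(1) by simp
  then have "bq ((remdups w @ B1) @ u @ B2) ((u @ (remdups w @ B1)) @ B2)"
    using bq_ctxtR[of _ _ B2] B(1) sp(1) by fastforce
  then have wt: "bq w (u @ t)" using B(2) sp(1) t_def bq_trans by auto
  have cX: "c \<in> X" using uX c by blast
  have "(c, x) \<in> rr" using comp_rel[OF C(1) c(2) x] .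
  then have "x \<in> orb c t" using rr_orb orb_closed[OF cX tX tg] by blast
  then obtain v where v: "cen v" "x \<in> set v" "bq (u @ t) (v @ t)"
    using orb_reach[OF sp(2) c(1) tX] by blast
  obtain v1 v2 where vv: "v = v1 @ x # v2" using v(2) split_list by fast
  have vX: "set v \<subseteq> X" using v(1) cen_def by blast
  have "bq (v1 @ (x # v2)) ((x # v2) @ map (act (x # v2)) v1)"
    using mv_block[of v1 "x # v2"] vX vv by simp
  then have "bq ((v1 @ (x # v2)) @ t) (((x # v2) @ map (act (x # v2)) v1) @ t)"
    using bq_ctxtR tX by blast
  then have "bq (v @ t) (x # (v2 @ map (act (x # v2)) v1 @ t))" using vv by simp
  moreover have "set (v2 @ map (act (x # v2)) v1 @ t) \<subseteq> X"
    using act_closed[of "x # v2"] vX vv tX by (auto simp del: act.simps)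
  moreover have "generates X op (v2 @ map (act (x # v2)) v1 @ t)"
    by (rule gen_mono[OF tg]) auto
  ultimately show ?thesis using wt v(3) bq_trans by blast
qed

end

context frack
begin

definition cls :: "'a list \<Rightarrow> 'a list set" where "cls w = {v. bq w v}"

lemma cls_eq: "cls w = cls w' \<longleftrightarrow> bq w w'"
proof
  assume "cls w = cls w'"
  then have "w' \<in> cls w" unfolding cls_def by auto
  then show "bq w w'" unfolding cls_def by simp
next
  assume "bq w w'"
  then show "cls w = cls w'" unfolding cls_def using bq_sym bq_trans by blast
qed

definition good :: "('a set \<Rightarrow> nat) \<Rightarrow> 'a list set" where
  "good n = {w. set w \<subseteq> X \<and> generates X op w \<and> (\<forall>C\<in>comps. cnt C w = n C)}"

definition A :: "('a set \<Rightarrow> nat) \<Rightarrow> 'a list set set" where "A n = cls ` good n"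

definition f :: "('a set \<Rightarrow> nat) \<Rightarrow> nat" where "f n = card (A n)"

definition h :: "'a \<Rightarrow> 'a list set \<Rightarrow> 'a list set" where "h x S = cls (x # (SOME w. w \<in> S))"

lemma h_cls: "x \<in> X \<Longrightarrow> h x (cls w) = cls (x # w)"
proof -
  assume x: "x \<in> X"
  have "w \<in> cls w" unfolding cls_def by simp
  then have "(SOME w'. w' \<in> cls w) \<in> cls w" by (rule someI)
  then have "bq w (SOME w'. w' \<in> cls w)" unfolding cls_def by simp
  then have "bq (x # w) (x # (SOME w'. w' \<in> cls w))" using bq_ctxtL[of _ _ "[x]"] x by simp
  then show ?thesis unfolding h_def using cls_eq bq_sym by metis
qed

lemma sum_ind: "a \<in> X \<Longrightarrow> (\<Sum>C\<in>comps. (if a \<in> C then 1 else 0 :: nat)) = 1"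
proof -
  assume a: "a \<in> X"
  obtain Ca where Ca: "Ca \<in> comps" "a \<in> Ca" using comp_ex[OF a] by blast
  have "(\<Sum>C\<in>comps. (if a \<in> C then 1 else 0 :: nat)) = (\<Sum>C\<in>comps. (if C = Ca then 1 else 0))"
    using comp_uniq Ca by (intro sum.cong) auto
  also have "\<dots> = 1" using Ca finite_comps by simp
  finally show ?thesis .
qed

lemma len_sum: "set w \<subseteq> X \<Longrightarrow> length w = (\<Sum>C\<in>comps. cnt C w)"
proof (induction w)
  case Nil then show ?case by simp
next
  case (Cons a w)
  then have "(\<Sum>C\<in>comps. cnt C (a # w)) = (\<Sum>C\<in>comps. (if a \<in> C then 1 else 0 :: nat)) + (\<Sum>C\<in>comps. cnt C w)"
    by (simp add: sum.distrib)
  also have "\<dots> = 1 + length w" using sum_ind Cons by simp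
  finally show ?case by simp
qed

lemma finA: "finite (A n)"
proof -
  have "good n \<subseteq> {w. set w \<subseteq> X \<and> length w = (\<Sum>C\<in>comps. n C)}"
    unfolding good_def using len_sum by auto
  moreover have "finite {w. set w \<subseteq> X \<and> length w = (\<Sum>C\<in>comps. n C)}"
    using finite_lists_length_eq[OF finX] by blast
  ultimately show ?thesis unfolding A_def by (meson finite_imageI finite_subset)
qed

lemma A_cong: "\<forall>C\<in>comps. n C = n' C \<Longrightarrow> A n = A n'"
  unfolding A_def good_def by simp

lemma stepA:
  assumes n: "\<forall>C\<in>comps. K0 \<le> n C" and C: "C \<in> comps" and x: "x \<in> C"
  shows "h x ` A n = A (n(C := Suc (n C)))"
proof
  have xX: "x \<in> X" using comp_sub C x by blast
  have xin: "\<forall>C'\<in>comps. (x \<in> C' \<longleftrightarrow> C' = C)" using comp_uniq C x by blast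
  show "h x ` A n \<subseteq> A (n(C := Suc (n C)))"
  proof
    fix S assume "S \<in> h x ` A n"
    then obtain w where w: "w \<in> good n" "S = h x (cls w)" unfolding A_def by blast
    then have S: "S = cls (x # w)" using h_cls xX by simp
    have "x # w \<in> good (n(C := Suc (n C)))"
      using w(1) xX xin unfolding good_def by (auto intro: gen_mono)
    then show "S \<in> A (n(C := Suc (n C)))" unfolding A_def S by blast
  qed
  show "A (n(C := Suc (n C))) \<subseteq> h x ` A n"
  proof
    fix S assume "S \<in> A (n(C := Suc (n C)))"
    then obtain w where w: "w \<in> good (n(C := Suc (n C)))" "S = cls w" unfolding A_def by blast
    have wX: "set w \<subseteq> X" "generates X op w" using w(1) good_def by auto
    have "cnt C w = Suc (n C)" using w(1) C unfolding good_def by auto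
    then have "K0 \<le> cnt C w" using n C by auto
    then obtain m where m: "set m \<subseteq> X" "generates X op m" "bq w (x # m)"
      using absorb[OF wX C] x by blast
    have "\<forall>C'\<in>comps. cnt C' m = n C'"
    proof
      fix C' assume C': "C' \<in> comps"
      have "cnt C' w = cnt C' (x # m)" using bq_cnt[OF m(3) C'] .
      moreover have "cnt C' w = (n(C := Suc (n C))) C'" using w(1) C' unfolding good_def by auto
      ultimately show "cnt C' m = n C'" using xin C' by (auto split: if_splits)
    qed
    then have "m \<in> good n" using m unfolding good_def by auto
    moreover have "S = h x (cls m)" using w(2) h_cls[OF xX] cls_eq m(3) by simp
    ultimately show "S \<in> h x ` A n" unfolding A_def by blast
  qed
qed

lemma fmono1: "\<forall>C\<in>comps. K0 \<le> n C \<Longrightarrow> C \<in> comps \<Longrightarrow> f (n(C := Suc (n C))) \<le> f n"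
proof -
  assume n: "\<forall>C\<in>comps. K0 \<le> n C" and C: "C \<in> comps"
  obtain x where x: "x \<in> C" using comp_ne[OF C] by blast
  have "f (n(C := Suc (n C))) = card (h x ` A n)" unfolding f_def using stepA[OF n C x] by simp
  also have "\<dots> \<le> card (A n)" using card_image_le[OF finA] .
  finally show ?thesis unfolding f_def .
qed

lemma fmono: "\<forall>C\<in>comps. K0 \<le> n C \<Longrightarrow> \<forall>C\<in>comps. n C \<le> n' C \<Longrightarrow> f n' \<le> f n"
proof (induction "\<Sum>C\<in>comps. (n' C - n C)" arbitrary: n' rule: less_induct)
  case less
  show ?case
  proof (cases "\<forall>C\<in>comps. n' C = n C")
    case True then show ?thesis using A_cong[of n' n] unfolding f_def by simp
  next
    case False
    then obtain C where C: "C \<in> comps" "n C < n' C" using less.prems(2) le_neq_implies_less by metis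
    define n'' where "n'' = n'(C := n' C - 1)"
    have le: "\<forall>C\<in>comps. n C \<le> n'' C" using less.prems(2) C unfolding n''_def by auto
    have lt: "(\<Sum>C\<in>comps. (n'' C - n C)) < (\<Sum>C\<in>comps. (n' C - n C))"
      using C less.prems(2) finite_comps unfolding n''_def
      by (intro sum_strict_mono_ex1) auto
    have 1: "f n'' \<le> f n" using less.hyps[OF lt less.prems(1) le] .
    have "A n' = A (n''(C := Suc (n'' C)))" using C unfolding n''_def by (intro A_cong) auto
    moreover have "f (n''(C := Suc (n'' C))) \<le> f n''"
      using fmono1[OF _ C(1)] le less.prems(1) by (meson order_trans)
    ultimately show ?thesis using 1 unfolding f_def by simp
  qed
qed

lemma stab: "\<exists>t0\<ge>K0. \<forall>n. (\<forall>C\<in>comps. t0 \<le> n C) \<longrightarrow> f n = f (\<lambda>_. t0)"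
proof -
  define d where "d t = f (\<lambda>_. t)" for t
  define v where "v = (LEAST v. \<exists>t\<ge>K0. d t = v)"
  have "\<exists>t\<ge>K0. d t = v" unfolding v_def by (rule LeastI[of _ "d K0"]) auto
  then obtain t0 where t0: "t0 \<ge> K0" "d t0 = v" by blast
  have vmin: "v \<le> d t" if "t \<ge> K0" for t unfolding v_def by (rule Least_le) (use that in auto)
  show ?thesis
  proof (intro exI[of _ t0] conjI allI impI)
    show "K0 \<le> t0" by (rule t0(1))
    fix n assume n: "\<forall>C\<in>comps. t0 \<le> n C"
    define M where "M = Max (insert t0 (n ` comps))"
    have M: "t0 \<le> M" "\<forall>C\<in>comps. n C \<le> M" using finite_comps unfolding M_def by auto
    have "f n \<le> f (\<lambda>_. t0)" using fmono[of "\<lambda>_. t0" n] n t0(1) by simp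
    moreover have "f (\<lambda>_. M) \<le> f n" using fmono[of n "\<lambda>_. M"] n t0(1) M by (meson order_trans)
    moreover have "v \<le> d M" using vmin M t0 by simp
    ultimately show "f n = f (\<lambda>_. t0)" using t0 unfolding d_def by simp
  qed
qed

lemma peel:
  assumes t0: "t0 \<ge> K0" "\<forall>n. (\<forall>C\<in>comps. t0 \<le> n C) \<longrightarrow> f n = f (\<lambda>_. t0)"
  shows "set p \<subseteq> X \<Longrightarrow> set xs \<subseteq> X \<Longrightarrow> set ys \<subseteq> X \<Longrightarrow> generates X op xs \<Longrightarrow> generates X op ys \<Longrightarrow>
     \<forall>C\<in>comps. t0 \<le> cnt C xs \<Longrightarrow> \<forall>C\<in>comps. t0 \<le> cnt C ys \<Longrightarrow> bq (p @ xs) (p @ ys) \<Longrightarrow> bq xs ys"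
proof (induction p)
  case Nil then show ?case by simp
next
  case (Cons x p)
  have xX: "x \<in> X" and pX: "set p \<subseteq> X" using Cons.prems by auto
  obtain C where C: "C \<in> comps" "x \<in> C" using comp_ex[OF xX] by blast
  define n where "n C' = cnt C' (p @ xs)" for C'
  have cnteq: "\<forall>C'\<in>comps. cnt C' (p @ ys) = n C'"
    using bq_cnt[OF Cons.prems(8)] unfolding n_def by simp
  have g1: "cls (p @ xs) \<in> A n" unfolding A_def good_def n_def
    using pX Cons.prems gen_mono[of xs "p @ xs"] by auto
  have g2: "cls (p @ ys) \<in> A n" unfolding A_def good_def
    using pX Cons.prems gen_mono[of ys "p @ ys"] cnteq by auto
  have nt: "\<forall>C'\<in>comps. t0 \<le> n C'" unfolding n_def using Cons.prems(6) by fastforce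
  have nK: "\<forall>C'\<in>comps. K0 \<le> n C'" using nt t0(1) by (meson order_trans)
  have nt': "\<forall>C'\<in>comps. t0 \<le> (n(C := Suc (n C))) C'" using nt by auto
  have "card (h x ` A n) = card (A n)"
    using stepA[OF nK C] t0(2) nt nt' unfolding f_def by metis
  then have inj: "inj_on (h x) (A n)" using eq_card_imp_inj_on finA by blast
  have "cls (x # p @ xs) = cls (x # p @ ys)" using cls_eq Cons.prems(8) by simp
  then have "h x (cls (p @ xs)) = h x (cls (p @ ys))" using h_cls[OF xX] by simp
  then have "cls (p @ xs) = cls (p @ ys)" using inj g1 g2 inj_onD by metis
  then have "bq (p @ xs) (p @ ys)" using cls_eq by blast
  then show ?case using Cons.IH pX Cons.prems by blast
qed

lemma main: "\<exists>N0. \<forall>N \<ge> N0. \<forall>xs \<in> S_star X op N. \<forall>ys \<in> S_star X op N.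
           gamma_eq X op (gamma_word xs) (gamma_word ys) \<longrightarrow> braid_equiv op xs ys"
proof -
  obtain t0 where t0: "t0 \<ge> K0" "\<forall>n. (\<forall>C\<in>comps. t0 \<le> n C) \<longrightarrow> f n = f (\<lambda>_. t0)"
    using stab by blast
  show ?thesis
  proof (intro exI[of _ t0] allI impI ballI)
    fix N xs ys assume N: "t0 \<le> N" and xs: "xs \<in> S_star X op N" and ys: "ys \<in> S_star X op N"
      and g: "gamma_eq X op (gamma_word xs) (gamma_word ys)"
    have xs': "set xs \<subseteq> X" "generates X op xs" "\<forall>C\<in>comps. t0 \<le> cnt C xs"
      using xs N unfolding S_star_def cnt_def by (auto intro: order_trans)
    have ys': "set ys \<subseteq> X" "generates X op ys" "\<forall>C\<in>comps. t0 \<le> cnt C ys"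
      using ys N unfolding S_star_def cnt_def by (auto intro: order_trans)
    obtain s where s: "set s \<subseteq> X" "bq (Z s @ xs) (Z s @ ys)" using loc_gw[OF g xs'(1) ys'(1)] by blast
    have "bq xs ys"
      using peel[OF t0 set_Z[OF s(1)] xs'(1) ys'(1) xs'(2) ys'(2) xs'(3) ys'(3) s(2)] .
    then show "braid_equiv op xs ys" by (rule bq_braid)
  qed
qed

end

theorem theorem4p24:
  fixes X :: "'a set" and op :: "'a \<Rightarrow> 'a \<Rightarrow> 'a"
  assumes "finite X" and "rack X op"
  shows "\<exists>N0. \<forall>N \<ge> N0. \<forall>xs \<in> S_star X op N. \<forall>ys \<in> S_star X op N.
           gamma_eq X op (gamma_word xs) (gamma_word ys) \<longrightarrow> braid_equiv op xs ys"
proof -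
  interpret frack X op by (rule frack.intro) (rule assms)+
  show ?thesis by (rule main)
qed

end
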